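(* For every $m\ge1$, let $V^{(1)}_m$ and $V^{(2)}_m$ be the linear spans in $\mathbb{C}[\mathbb{S}_m]$ of all one-hyper-arc elements and of all two-hyper-arc elements, respectively, and let $R_m$ be the span of all $\alpha-\sigma_m^{-1}\alpha\sigma_m$, $\alpha\in\mathbb{S}_m$. Then $V^{(1)}_m+V^{(2)}_m=R_m+V^{(2)}_m$; i.e. modulo two-hyper-arc relations, the one-hyper-arc relations are equivalent to identifying each permutation with its cyclic shifts.
   Context: $\sigma_m=(1,2,\dots,m)\in\mathbb{S}_m$. Generalized Vassiliev elements: let $m\ge2$, $\gamma\in\mathbb{S}_{m-1}$, and $q\in[m-1]\cup\{*\}$. For $t\in\{0,1,\dots,m-1\}$ let $\alpha_t=\alpha_t(\gamma,q)\in\mathbb{S}_m$ be obtained as follows: place the points $1,\dots,m-1$ on a line in increasing order, insert a new point $x$ (the free leg) in the gap between $t$ and $t+1$ (before $1$ if $t=0$, after $m-1$ if $t=m-1$), and relabel the $m$ points by $1,\dots,m$ in order; the permutation acts as $\gamma$ on the old points, except that if $q\neq *$ then $q\mapsto x\mapsto\gamma(q)$, and if $q=*$ then $x$ is a fixed point. For a cycle $v$ of $\gamma$ put $E(\gamma,q,v)=\sum_{j\in v}(\alpha_{j-1}-\alpha_j)\in\mathbb{C}[\mathbb{S}_m]$. It is a one-hyper-arc element if $q\ne*$ and $q\in v$, and a two-hyper-arc element otherwise. *)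

theory Defs
  imports Complex_Main "HOL-Combinatorics.Permutations"
begin

text \<open>Elements of the group algebra C[S_m] are represented as functions
  from permutations (maps nat => nat that permute {1..m}) to complex coefficients.
  Vector operations are pointwise.\<close>

type_synonym galg = "(nat \<Rightarrow> nat) \<Rightarrow> complex"

definition basis_elt :: "(nat \<Rightarrow> nat) \<Rightarrow> galg" where
  "basis_elt a = (\<lambda>p. if p = a then 1 else 0)"

definition lspan :: "galg set \<Rightarrow> galg set" where
  "lspan S = {f. \<exists>T c. finite T \<and> T \<subseteq> S \<and> f = (\<lambda>p. \<Sum>v\<in>T. c v * v p)}"

definition setsum_sp :: "galg set \<Rightarrow> galg set \<Rightarrow> galg set" where
  "setsum_sp A B = {(\<lambda>p. a p + b p) | a b. a \<in> A \<and> b \<in> B}"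

definition sigma :: "nat \<Rightarrow> nat \<Rightarrow> nat" where
  "sigma m j = (if 1 \<le> j \<and> j < m then j + 1 else if j = m then 1 else j)"

text \<open>New label of old point i when the free leg is inserted in the gap after t.\<close>
definition ins :: "nat \<Rightarrow> nat \<Rightarrow> nat" where
  "ins t i = (if i \<le> t then i else i + 1)"

text \<open>alpha_t(gamma,q) in S_m; q = None encodes q = *. The free leg x gets label t+1.\<close>
definition alpha :: "nat \<Rightarrow> (nat \<Rightarrow> nat) \<Rightarrow> nat option \<Rightarrow> nat \<Rightarrow> nat \<Rightarrow> nat" where
  "alpha m \<gamma> q t j =
     (if j < 1 \<or> m < j then j
      else if j = t + 1 then (case q of None \<Rightarrow> t + 1 | Some q' \<Rightarrow> ins t (\<gamma> q'))
      else (let i = (if j \<le> t then j else j - 1) in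
            if q = Some i then t + 1 else ins t (\<gamma> i)))"

definition is_cycle_of :: "(nat \<Rightarrow> nat) \<Rightarrow> nat \<Rightarrow> nat set \<Rightarrow> bool" where
  "is_cycle_of \<gamma> n v \<longleftrightarrow> (\<exists>a\<in>{1..n}. v = {(\<gamma> ^^ k) a | k. True})"

definition E_elt :: "nat \<Rightarrow> (nat \<Rightarrow> nat) \<Rightarrow> nat option \<Rightarrow> nat set \<Rightarrow> galg" where
  "E_elt m \<gamma> q v = (\<lambda>p. \<Sum>j\<in>v. basis_elt (alpha m \<gamma> q (j - 1)) p - basis_elt (alpha m \<gamma> q j) p)"

definition valid_q :: "nat \<Rightarrow> nat option \<Rightarrow> bool" where
  "valid_q n q \<longleftrightarrow> (case q of None \<Rightarrow> True | Some q' \<Rightarrow> q' \<in> {1..n})"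

definition one_hyper :: "nat \<Rightarrow> galg set" where
  "one_hyper m = {E_elt m \<gamma> q v | \<gamma> q v. 2 \<le> m \<and> \<gamma> permutes {1..m-1} \<and> valid_q (m-1) q
      \<and> is_cycle_of \<gamma> (m-1) v \<and> (\<exists>q'. q = Some q' \<and> q' \<in> v)}"

definition two_hyper :: "nat \<Rightarrow> galg set" where
  "two_hyper m = {E_elt m \<gamma> q v | \<gamma> q v. 2 \<le> m \<and> \<gamma> permutes {1..m-1} \<and> valid_q (m-1) q
      \<and> is_cycle_of \<gamma> (m-1) v \<and> \<not> (\<exists>q'. q = Some q' \<and> q' \<in> v)}"

definition rot_gens :: "nat \<Rightarrow> galg set" where
  "rot_gens m = {(\<lambda>p. basis_elt a p - basis_elt (inv (sigma m) \<circ> a \<circ> sigma m) p) | a. a permutes {1..m}}"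

end

theory Submission
  imports Defs "HOL-Combinatorics.Orbits"
begin

definition subsp :: "galg set \<Rightarrow> bool" where
 "subsp W \<longleftrightarrow> (\<lambda>p. 0) \<in> W \<and> (\<forall>f\<in>W. \<forall>g\<in>W. (\<lambda>p. f p + g p) \<in> W) \<and> (\<forall>c f. f \<in> W \<longrightarrow> (\<lambda>p. c * f p) \<in> W)"

lemma subsp_add: "subsp W \<Longrightarrow> f \<in> W \<Longrightarrow> g \<in> W \<Longrightarrow> (\<lambda>p. f p + g p) \<in> W"
  unfolding subsp_def by blast
lemma subsp_scale: "subsp W \<Longrightarrow> f \<in> W \<Longrightarrow> (\<lambda>p. c * f p) \<in> W"
  unfolding subsp_def by blast
lemma subsp_zero: "subsp W \<Longrightarrow> (\<lambda>p. 0) \<in> W"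
  unfolding subsp_def by blast

lemma subsp_sum:
  assumes "subsp W" "finite F" "\<And>w. w \<in> F \<Longrightarrow> g w \<in> W"
  shows "(\<lambda>p. \<Sum>w\<in>F. g w p) \<in> W"
  using assms(2,3)
proof (induction F rule: finite_induct)
  case empty then show ?case using assms(1) by (simp add: subsp_def)
next
  case (insert x F)
  have "(\<lambda>p. g x p + (\<Sum>w\<in>F. g w p)) \<in> W"
    using subsp_add[OF assms(1) insert(4)[of x] insert(3)] insert(4) by simp
  then show ?case using insert by simp
qed

lemma lspan_least: assumes "subsp W" "S \<subseteq> W" shows "lspan S \<subseteq> W"
proof
  fix f assume "f \<in> lspan S"
  then obtain T c where T: "finite T" "T \<subseteq> S" "f = (\<lambda>p. \<Sum>v\<in>T. c v * v p)"
    unfolding lspan_def by blast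
  have "(\<lambda>p. \<Sum>v\<in>T. (\<lambda>p. c v * v p) p) \<in> W"
    using T assms by (intro subsp_sum) (auto simp: subsp_def)
  then show "f \<in> W" using T by simp
qed

lemma lspan_sup: "S \<subseteq> lspan S"
proof
  fix s assume "s \<in> S"
  then show "s \<in> lspan S" unfolding lspan_def
    by (intro CollectI exI[of _ "{s}"] exI[of _ "\<lambda>_. 1"]) auto
qed

lemma subsp_lspan: "subsp (lspan S)"
  unfolding subsp_def
proof (intro conjI ballI allI impI)
  show "(\<lambda>p. 0) \<in> lspan S" unfolding lspan_def
    by (intro CollectI exI[of _ "{}"]) auto
next
  fix f g assume "f \<in> lspan S" "g \<in> lspan S"
  then obtain T1 c1 T2 c2 where T: "finite T1" "T1 \<subseteq> S" "f = (\<lambda>p. \<Sum>v\<in>T1. c1 v * v p)"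
     "finite T2" "T2 \<subseteq> S" "g = (\<lambda>p. \<Sum>v\<in>T2. c2 v * v p)"
    unfolding lspan_def by blast
  define c where "c v = (if v \<in> T1 then c1 v else 0) + (if v \<in> T2 then c2 v else 0)" for v
  have "(\<lambda>p. f p + g p) = (\<lambda>p. \<Sum>v\<in>T1 \<union> T2. c v * v p)"
  proof
    fix p
    have "(\<Sum>v\<in>T1 \<union> T2. c v * v p) = (\<Sum>v\<in>T1 \<union> T2. (if v \<in> T1 then c1 v * v p else 0))
         + (\<Sum>v\<in>T1 \<union> T2. (if v \<in> T2 then c2 v * v p else 0))"
      unfolding sum.distrib[symmetric] by (intro sum.cong refl) (auto simp: c_def algebra_simps)
    also have "\<dots> = f p + g p"
      using T by (simp add: sum.inter_restrict[OF finite_UnI[OF T(1) T(4)], symmetric] Int_absorb1 Int_absorb2)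
    finally show "f p + g p = (\<Sum>v\<in>T1 \<union> T2. c v * v p)" by simp
  qed
  then show "(\<lambda>p. f p + g p) \<in> lspan S" using T unfolding lspan_def
    by (intro CollectI exI[of _ "T1 \<union> T2"] exI[of _ c]) auto
next
  fix c f assume "f \<in> lspan S"
  then obtain T c1 where T: "finite T" "T \<subseteq> S" "f = (\<lambda>p. \<Sum>v\<in>T. c1 v * v p)"
    unfolding lspan_def by blast
  have "(\<lambda>p. c * f p) = (\<lambda>p. \<Sum>v\<in>T. (c * c1 v) * v p)"
    using T by (simp add: sum_distrib_left mult.assoc)
  then show "(\<lambda>p. c * f p) \<in> lspan S" using T unfolding lspan_def
    by (intro CollectI exI[of _ T] exI[of _ "\<lambda>v. c * c1 v"]) auto
qed

lemma subsp_setsum: assumes "subsp A" "subsp B" shows "subsp (setsum_sp A B)"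
  unfolding subsp_def setsum_sp_def
proof (intro conjI ballI allI impI)
  show "(\<lambda>p. 0) \<in> {\<lambda>p. a p + b p |a b. a \<in> A \<and> b \<in> B}"
    using subsp_zero[OF assms(1)] subsp_zero[OF assms(2)]
    by (intro CollectI exI[of _ "\<lambda>p. 0"] exI[of _ "\<lambda>p. 0"]) simp
next
  fix f g assume "f \<in> {\<lambda>p. a p + b p |a b. a \<in> A \<and> b \<in> B}" "g \<in> {\<lambda>p. a p + b p |a b. a \<in> A \<and> b \<in> B}"
  then obtain a1 b1 a2 b2 where ab: "a1 \<in> A" "b1 \<in> B" "a2 \<in> A" "b2 \<in> B"
    "f = (\<lambda>p. a1 p + b1 p)" "g = (\<lambda>p. a2 p + b2 p)" by blast
  have "(\<lambda>p. a1 p + a2 p) \<in> A" "(\<lambda>p. b1 p + b2 p) \<in> B" using ab assms unfolding subsp_def by blast+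
  moreover have "(\<lambda>p. f p + g p) = (\<lambda>p. (\<lambda>p. a1 p + a2 p) p + (\<lambda>p. b1 p + b2 p) p)"
    using ab by (simp add: algebra_simps)
  ultimately show "(\<lambda>p. f p + g p) \<in> {\<lambda>p. a p + b p |a b. a \<in> A \<and> b \<in> B}"
    by (intro CollectI exI[of _ "\<lambda>p. a1 p + a2 p"] exI[of _ "\<lambda>p. b1 p + b2 p"]) simp
next
  fix c f assume "f \<in> {\<lambda>p. a p + b p |a b. a \<in> A \<and> b \<in> B}"
  then obtain a1 b1 where ab: "a1 \<in> A" "b1 \<in> B" "f = (\<lambda>p. a1 p + b1 p)" by blast
  have "(\<lambda>p. c * a1 p) \<in> A" "(\<lambda>p. c * b1 p) \<in> B" using ab assms unfolding subsp_def by blast+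
  moreover have "(\<lambda>p. c * f p) = (\<lambda>p. (\<lambda>p. c * a1 p) p + (\<lambda>p. c * b1 p) p)"
    using ab by (simp add: algebra_simps)
  ultimately show "(\<lambda>p. c * f p) \<in> {\<lambda>p. a p + b p |a b. a \<in> A \<and> b \<in> B}"
    by (intro CollectI exI[of _ "\<lambda>p. c * a1 p"] exI[of _ "\<lambda>p. c * b1 p"]) simp
qed

lemma setsum_left: assumes "subsp B" "x \<in> A" shows "x \<in> setsum_sp A B"
  using assms subsp_zero[OF assms(1)] unfolding setsum_sp_def
  by (intro CollectI exI[of _ x] exI[of _ "\<lambda>p. 0"]) simp

lemma setsum_right: assumes "subsp A" "x \<in> B" shows "x \<in> setsum_sp A B"
  using assms subsp_zero[OF assms(1)] unfolding setsum_sp_def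
  by (intro CollectI exI[of _ "\<lambda>p. 0"] exI[of _ x]) simp

lemma setsum_sub: assumes "subsp W" "A \<subseteq> W" "B \<subseteq> W" shows "setsum_sp A B \<subseteq> W"
proof
  fix x assume "x \<in> setsum_sp A B"
  then obtain a b where ab: "a \<in> A" "b \<in> B" "x = (\<lambda>p. a p + b p)" unfolding setsum_sp_def by blast
  have "a \<in> W" "b \<in> W" using ab assms by auto
  then show "x \<in> W" using subsp_add[OF assms(1)] ab(3) by simp
qed


lemma sigma_inj: "1 \<le> m \<Longrightarrow> inj (sigma m)"
  unfolding inj_def sigma_def by auto

lemma sigma_comm: assumes "1 \<le> m" shows "sigma m \<circ> alpha m \<gamma> q (m - 1) = alpha m \<gamma> q 0 \<circ> sigma m"
proof
  fix j
  have ins0: "ins 0 y = sigma m (ins (m-1) y)" for y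
    using assms by (cases "y = 0") (auto simp: ins_def sigma_def)
  consider "j = 0" | "m = 0" "j \<noteq> 0" | "1 \<le> j" "j < m" | "j = m" "m \<noteq> 0" | "m < j"  "m \<noteq> 0" by linarith
  then show "(sigma m \<circ> alpha m \<gamma> q (m - 1)) j = (alpha m \<gamma> q 0 \<circ> sigma m) j"
  proof cases
    case 1 then show ?thesis by (simp add: sigma_def alpha_def)
  next
    case 2 then show ?thesis by (simp add: sigma_def alpha_def)
  next
    case 3
    then have s: "sigma m j = j + 1" by (simp add: sigma_def)
    have a0: "alpha m \<gamma> q 0 (j+1) = (if q = Some j then 1 else ins 0 (\<gamma> j))"
      using 3 by (simp add: alpha_def)
    have a1: "alpha m \<gamma> q (m-1) j = (if q = Some j then m else ins (m-1) (\<gamma> j))"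
    proof -
      have "j \<le> m - 1" "j \<noteq> m - 1 + 1" "\<not> j < 1" "\<not> m < j" using 3 by auto
      then show ?thesis by (simp add: alpha_def Let_def)
    qed
    have sm: "sigma m m = 1" by (simp add: sigma_def)
    show ?thesis using s a0 a1 sm ins0 by simp
  next
    case 4
    then have s: "sigma m j = 1" by (simp add: sigma_def)
    have a0: "alpha m \<gamma> q 0 1 = (case q of None \<Rightarrow> 1 | Some q' \<Rightarrow> ins 0 (\<gamma> q'))"
      using 4 by (cases q) (simp_all add: alpha_def)
    have a1: "alpha m \<gamma> q (m-1) j = (case q of None \<Rightarrow> m | Some q' \<Rightarrow> ins (m-1) (\<gamma> q'))"
    proof -
      have "j = m - 1 + 1" "\<not> j < 1" "\<not> m < j" using 4 by auto
      then show ?thesis using 4 by (cases q) (simp_all add: alpha_def)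
    qed
    have sm: "sigma m m = 1" by (simp add: sigma_def)
    show ?thesis using s a0 a1 sm ins0 by (cases q) simp_all
  next
    case 5 then show ?thesis by (simp add: sigma_def alpha_def)
  qed
qed

lemma conj_alpha: assumes "1 \<le> m" shows "inv (sigma m) \<circ> alpha m \<gamma> q 0 \<circ> sigma m = alpha m \<gamma> q (m - 1)"
proof -
  have "inv (sigma m) \<circ> alpha m \<gamma> q 0 \<circ> sigma m = inv (sigma m) \<circ> (alpha m \<gamma> q 0 \<circ> sigma m)"
    by (rule comp_assoc)
  also have "\<dots> = inv (sigma m) \<circ> (sigma m \<circ> alpha m \<gamma> q (m - 1))"
    by (simp only: sigma_comm[OF assms])
  also have "\<dots> = (inv (sigma m) \<circ> sigma m) \<circ> alpha m \<gamma> q (m - 1)"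
    by (rule comp_assoc[symmetric])
  also have "\<dots> = alpha m \<gamma> q (m - 1)"
    by (simp add: inv_o_cancel[OF sigma_inj[OF assms]])
  finally show ?thesis .
qed

lemma alpha0_val:
  assumes "\<gamma> permutes {1..m-1}" "valid_q (m-1) q" "j \<in> {1..m}"
  shows "alpha m \<gamma> q 0 j = (if j = 1 then (case q of None \<Rightarrow> 1 | Some q' \<Rightarrow> \<gamma> q' + 1)
          else if q = Some (j-1) then 1 else \<gamma> (j-1) + 1)"
proof -
  have gi: "\<gamma> i \<in> {1..m-1}" if "i \<in> {1..m-1}" for i
    using permutes_in_image[OF assms(1)] that by blast
  have j: "\<not> j < 1" "\<not> m < j" using assms(3) by auto
  show ?thesis
  proof (cases "j = 1")
    case True
    then show ?thesis using j
    proof (cases q)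
      case (Some q')
      then have "\<gamma> q' \<noteq> 0" using gi[of q'] assms(2) by (auto simp: valid_q_def)
      then show ?thesis using True j Some by (simp add: alpha_def ins_def)
    qed (simp add: alpha_def)
  next
    case False
    then have "j - 1 \<in> {1..m-1}" using assms(3) by auto
    then have "\<gamma> (j-1) \<noteq> 0" using gi by force
    then show ?thesis using False j by (simp add: alpha_def ins_def Let_def)
  qed
qed

lemma alpha0_permutes:
  assumes "2 \<le> m" "\<gamma> permutes {1..m-1}" "valid_q (m-1) q"
  shows "alpha m \<gamma> q 0 permutes {1..m}"
proof (rule bij_imp_permutes)
  let ?f = "alpha m \<gamma> q 0"
  have gi: "\<gamma> i \<in> {1..m-1}" if "i \<in> {1..m-1}" for i
    using permutes_in_image[OF assms(2)] that by blast
  have ginj: "\<gamma> x = \<gamma> y \<longleftrightarrow> x = y" for x y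
    using permutes_inj[OF assms(2)] by (simp add: inj_eq)
  have im: "?f ` {1..m} \<subseteq> {1..m}"
  proof
    fix y assume "y \<in> ?f ` {1..m}"
    then obtain j where j: "j \<in> {1..m}" "y = ?f j" by blast
    note v = alpha0_val[OF assms(2,3) j(1)]
    show "y \<in> {1..m}"
    proof (cases "j = 1")
      case True
      show ?thesis
      proof (cases q)
        case None then show ?thesis using True j v assms(1) by simp
      next
        case (Some q')
        have "q' \<in> {1..m-1}" using Some assms(3) by (simp add: valid_q_def)
        then have "\<gamma> q' \<in> {1..m-1}" by (rule gi)
        then show ?thesis using True j v Some by auto
      qed
    next
      case False
      then have "j - 1 \<in> {1..m-1}" using j by auto
      then have "\<gamma> (j - 1) \<in> {1..m-1}" by (rule gi)
      then show ?thesis using False j v by (cases "q = Some (j - 1)") auto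
    qed
  qed
  have inj: "inj_on ?f {1..m}"
  proof
    fix x y assume xy: "x \<in> {1..m}" "y \<in> {1..m}" "?f x = ?f y"
    show "x = y"
    proof (cases q)
      case None
      have fz: "?f z = (if z = 1 then 1 else \<gamma> (z-1) + 1)" if "z \<in> {1..m}" for z
        using alpha0_val[OF assms(2,3) that] None by simp
      have gz: "\<gamma> (z-1) \<ge> 1" if "z \<in> {1..m}" "z \<noteq> 1" for z
      proof -
        have "z - 1 \<in> {1..m-1}" using that by auto
        then show ?thesis using gi by force
      qed
      have E: "(if x = 1 then 1 else \<gamma> (x-1) + 1) = (if y = 1 then 1 else \<gamma> (y-1) + 1)"
        using xy(3) by (simp only: fz[OF xy(1)] fz[OF xy(2)])
      show ?thesis
      proof (cases "x = 1"; cases "y = 1")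
        assume "x \<noteq> 1" "y \<noteq> 1"
        then have "\<gamma> (x-1) = \<gamma> (y-1)" using E by simp
        then have "x - 1 = y - 1" using ginj by simp
        then show ?thesis using xy(1,2) by auto
      next
        assume "x = 1" "y \<noteq> 1" then show ?thesis using E gz[OF xy(2)] by simp
      next
        assume "x \<noteq> 1" "y = 1" then show ?thesis using E gz[OF xy(1)] by simp
      qed simp
    next
      case (Some q')
      have q': "q' \<in> {1..m-1}" using Some assms(3) by (simp add: valid_q_def)
      define r where "r z = (if z = 1 then q' else z - 1)" for z
      have fz: "?f z = (if z = q' + 1 then 1 else \<gamma> (r z) + 1)" if "z \<in> {1..m}" for z
      proof -
        note v = alpha0_val[OF assms(2,3) that]
        show ?thesis
        proof (cases "z = 1")
          case True then show ?thesis using v Some q' unfolding r_def by simp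
        next
          case False
          have "(q = Some (z - 1)) = (z = q' + 1)" using Some False that by auto
          then show ?thesis using v False unfolding r_def by simp
        qed
      qed
      have gz: "\<gamma> (r z) \<ge> 1" if "z \<in> {1..m}" "z \<noteq> q' + 1" for z
      proof -
        have "r z \<in> {1..m-1}" using that q' unfolding r_def by auto
        then show ?thesis using gi by force
      qed
      have E: "(if x = q' + 1 then 1 else \<gamma> (r x) + 1) = (if y = q' + 1 then 1 else \<gamma> (r y) + 1)"
        using xy(3) by (simp only: fz[OF xy(1)] fz[OF xy(2)])
      show ?thesis
      proof (cases "x = q' + 1"; cases "y = q' + 1")
        assume xn: "x \<noteq> q' + 1" and yn: "y \<noteq> q' + 1"
        then have "\<gamma> (r x) = \<gamma> (r y)" using E by simp
        then have "r x = r y" using ginj by simp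
        then show ?thesis using xy(1,2) xn yn unfolding r_def by (simp split: if_splits)
      next
        assume "x = q' + 1" "y \<noteq> q' + 1" then show ?thesis using E gz[OF xy(2)] by simp
      next
        assume "x \<noteq> q' + 1" "y = q' + 1" then show ?thesis using E gz[OF xy(1)] by simp
      qed simp
    qed
  qed
  show "bij_betw ?f {1..m} {1..m}"
    unfolding bij_betw_def using inj endo_inj_surj[OF _ im inj] by simp
  show "\<And>x. x \<notin> {1..m} \<Longrightarrow> ?f x = x" by (auto simp: alpha_def)
qed

lemma tele: "(\<Sum>j\<in>{1..n::nat}. (g (j - 1) - g j :: complex)) = g 0 - g n"
  by (induction n) (auto simp: atLeastAtMostSuc_conv)

context
  fixes m :: nat and \<gamma> :: "nat \<Rightarrow> nat"
  assumes m: "2 \<le> m" and g: "\<gamma> permutes {1..m-1}"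
begin

lemma perm_g: "permutation \<gamma>"
  using g permutation_permutes by blast

lemma cyc_orbit: "is_cycle_of \<gamma> (m-1) v \<longleftrightarrow> (\<exists>a\<in>{1..m-1}. v = orbit \<gamma> a)"
  unfolding is_cycle_of_def orbit_altdef_permutation[OF perm_g] by simp

lemma C_eq: "{v. is_cycle_of \<gamma> (m-1) v} = (\<lambda>a. orbit \<gamma> a) ` {1..m-1}"
  using cyc_orbit by auto

lemma orbit_sub: "a \<in> {1..m-1} \<Longrightarrow> orbit \<gamma> a \<subseteq> {1..m-1}"
  unfolding orbit_altdef_permutation[OF perm_g] using permutes_in_funpow_image[OF g] by auto

lemma orbit_same: assumes "c \<in> orbit \<gamma> a" shows "orbit \<gamma> c = orbit \<gamma> a"
proof
  show "orbit \<gamma> c \<subseteq> orbit \<gamma> a" using assms orbit_trans by fast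
  have "a \<in> orbit \<gamma> c" using orbit_swap[OF permutation_self_in_orbit[OF perm_g] assms] .
  then show "orbit \<gamma> a \<subseteq> orbit \<gamma> c" using orbit_trans by fast
qed

lemma cyc_disj: "is_cycle_of \<gamma> (m-1) v \<Longrightarrow> is_cycle_of \<gamma> (m-1) w \<Longrightarrow> v \<noteq> w \<Longrightarrow> v \<inter> w = {}"
  unfolding cyc_orbit using orbit_same by blast

lemma cyc_finite: "finite {v. is_cycle_of \<gamma> (m-1) v}"
  unfolding C_eq by simp

lemma cyc_union: "\<Union>{v. is_cycle_of \<gamma> (m-1) v} = {1..m-1}"
  unfolding C_eq using orbit_sub permutation_self_in_orbit[OF perm_g] by blast

lemma cyc_fin: "is_cycle_of \<gamma> (m-1) v \<Longrightarrow> finite v"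
  unfolding cyc_orbit using orbit_sub finite_subset by blast

lemma sum_E: "(\<lambda>p. \<Sum>w\<in>{v. is_cycle_of \<gamma> (m-1) v}. E_elt m \<gamma> q w p)
   = (\<lambda>p. basis_elt (alpha m \<gamma> q 0) p - basis_elt (alpha m \<gamma> q (m-1)) p)"
proof
  fix p
  let ?h = "\<lambda>j. basis_elt (alpha m \<gamma> q (j - 1)) p - basis_elt (alpha m \<gamma> q j) p"
  have "(\<Sum>w\<in>{v. is_cycle_of \<gamma> (m-1) v}. E_elt m \<gamma> q w p) = (\<Sum>w\<in>{v. is_cycle_of \<gamma> (m-1) v}. sum ?h w)"
    unfolding E_elt_def by simp
  also have "\<dots> = sum ?h (\<Union>{v. is_cycle_of \<gamma> (m-1) v})"
  proof -
    have fin: "\<forall>A\<in>{v. is_cycle_of \<gamma> (m-1) v}. finite A" using cyc_fin by blast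
    have disj: "\<forall>A\<in>{v. is_cycle_of \<gamma> (m-1) v}. \<forall>B\<in>{v. is_cycle_of \<gamma> (m-1) v}. A \<noteq> B \<longrightarrow> A \<inter> B = {}"
      using cyc_disj by blast
    show ?thesis using sum.Union_disjoint[OF fin disj, of ?h] by simp
  qed
  also have "\<dots> = basis_elt (alpha m \<gamma> q 0) p - basis_elt (alpha m \<gamma> q (m-1)) p"
    unfolding cyc_union by (rule tele)
  finally show "(\<Sum>w\<in>{v. is_cycle_of \<gamma> (m-1) v}. E_elt m \<gamma> q w p) =
     basis_elt (alpha m \<gamma> q 0) p - basis_elt (alpha m \<gamma> q (m-1)) p" .
qed

end

lemma construct:
  assumes m: "2 \<le> m" and a: "a permutes {1..m}"
  shows "\<exists>\<gamma> q. \<gamma> permutes {1..m-1} \<and> valid_q (m-1) q \<and> alpha m \<gamma> q 0 = a"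
proof -
  have ai: "a j \<in> {1..m}" if "j \<in> {1..m}" for j using permutes_in_image[OF a] that by blast
  have aiS: "a (i+1) \<in> {1..m}" if "i \<in> {1..m-1}" for i
  proof -
    have "i + 1 \<in> {1..m}" using that m by auto
    then show ?thesis by (rule ai)
  qed
  have ainj: "a x = a y \<longleftrightarrow> x = y" for x y
    using permutes_inj[OF a] by (simp add: inj_eq)
  have aout: "a j = j" if "j \<notin> {1..m}" for j using a that by (simp add: permutes_not_in)
  obtain b where b: "b \<in> {1..m}" "a b = 1"
    using a m by (metis atLeastAtMost_iff le_trans one_le_numeral order_refl permutes_in_image permutes_surj surjD)
  show ?thesis
  proof (cases "b = 1")
    case True
    define \<gamma> where "\<gamma> i = (if i \<in> {1..m-1} then a (i+1) - 1 else i)" for i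
    have gim: "\<gamma> ` {1..m-1} \<subseteq> {1..m-1}"
    proof
      fix y assume "y \<in> \<gamma> ` {1..m-1}"
      then obtain i where i: "i \<in> {1..m-1}" "y = \<gamma> i" by blast
      have "a (i+1) \<noteq> 1" using i b True ainj[of "i+1" b] by auto
      then show "y \<in> {1..m-1}" using i aiS[OF i(1)] unfolding \<gamma>_def by auto
    qed
    have ginj: "inj_on \<gamma> {1..m-1}"
    proof
      fix x y assume xy: "x \<in> {1..m-1}" "y \<in> {1..m-1}" "\<gamma> x = \<gamma> y"
      have "a (x+1) \<noteq> 1" "a (y+1) \<noteq> 1" using xy b True ainj[of "x+1" b] ainj[of "y+1" b] by auto
      then have "a (x+1) = a (y+1)" using xy aiS[OF xy(1)] aiS[OF xy(2)] unfolding \<gamma>_def by auto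
      then show "x = y" using ainj by simp
    qed
    have gp: "\<gamma> permutes {1..m-1}"
    proof (rule bij_imp_permutes)
      have "\<gamma> ` {1..m-1} = {1..m-1}" by (rule endo_inj_surj[OF _ gim ginj]) simp
      then show "bij_betw \<gamma> {1..m-1} {1..m-1}" using ginj by (simp add: bij_betw_def)
      show "\<gamma> x = x" if "x \<notin> {1..m-1}" for x using that unfolding \<gamma>_def by auto
    qed
    have "alpha m \<gamma> None 0 = a"
    proof
      fix j
      show "alpha m \<gamma> None 0 j = a j"
      proof (cases "j \<in> {1..m}")
        case False then show ?thesis using aout by (auto simp: alpha_def)
      next
        case jin: True
        show ?thesis
        proof (cases "j = 1")
          case True then show ?thesis using b \<open>b = 1\<close> by (auto simp: alpha_def)
        next
          case False
          have "a j \<noteq> 1" using False b \<open>b = 1\<close> ainj[of j b] by auto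
          then show ?thesis using jin False ai[OF jin] by (auto simp: alpha_def ins_def \<gamma>_def Let_def)
        qed
      qed
    qed
    then show ?thesis using gp by (intro exI[of _ \<gamma>] exI[of _ None]) (simp add: valid_q_def)
  next
    case False
    define q' where "q' = b - 1"
    have q': "q' \<in> {1..m-1}" "b = q' + 1" using b False unfolding q'_def by auto
    define \<gamma> where "\<gamma> i = (if i = q' then a 1 - 1 else if i \<in> {1..m-1} then a (i+1) - 1 else i)" for i
    have a1: "a 1 \<noteq> 1" "a 1 \<in> {1..m}" using False b ainj[of 1 b] ai[of 1] m by auto
    have gim: "\<gamma> ` {1..m-1} \<subseteq> {1..m-1}"
    proof
      fix y assume "y \<in> \<gamma> ` {1..m-1}"
      then obtain i where i: "i \<in> {1..m-1}" "y = \<gamma> i" by blast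
      show "y \<in> {1..m-1}"
      proof (cases "i = q'")
        case True then show ?thesis using i a1 unfolding \<gamma>_def by auto
      next
        case False
        have "a (i+1) \<noteq> 1" using i b q' False ainj[of "i+1" b] by auto
        then show ?thesis using i False aiS[OF i(1)] unfolding \<gamma>_def by auto
      qed
    qed
    have ginj: "inj_on \<gamma> {1..m-1}"
    proof
      fix x y assume xy: "x \<in> {1..m-1}" "y \<in> {1..m-1}" "\<gamma> x = \<gamma> y"
      have ne: "x \<noteq> q' \<Longrightarrow> a (x+1) \<noteq> 1" "y \<noteq> q' \<Longrightarrow> a (y+1) \<noteq> 1"
        using xy b q' ainj[of "x+1" b] ainj[of "y+1" b] by auto
      have "(if x = q' then a 1 else a (x+1)) = (if y = q' then a 1 else a (y+1))"
        using xy aiS[OF xy(1)] aiS[OF xy(2)] a1 ne unfolding \<gamma>_def by (auto split: if_splits)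
      then show "x = y" using ainj xy by (auto split: if_splits)
    qed
    have gp: "\<gamma> permutes {1..m-1}"
    proof (rule bij_imp_permutes)
      have "\<gamma> ` {1..m-1} = {1..m-1}" by (rule endo_inj_surj[OF _ gim ginj]) simp
      then show "bij_betw \<gamma> {1..m-1} {1..m-1}" using ginj by (simp add: bij_betw_def)
      show "\<gamma> x = x" if "x \<notin> {1..m-1}" for x using that q'(1) by (auto simp: \<gamma>_def)
    qed
    have "alpha m \<gamma> (Some q') 0 = a"
    proof
      fix j
      show "alpha m \<gamma> (Some q') 0 j = a j"
      proof (cases "j \<in> {1..m}")
        case False then show ?thesis using aout by (auto simp: alpha_def)
      next
        case jin: True
        show ?thesis
        proof (cases "j = 1")
          case True then show ?thesis using a1 q' by (auto simp: alpha_def ins_def \<gamma>_def)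
        next
          case False
          show ?thesis
          proof (cases "j = b")
            case True then show ?thesis using b q' False by (auto simp: alpha_def Let_def)
          next
            case jb: False
            have "a j \<noteq> 1" using jb b ainj[of j b] by auto
            then show ?thesis using jin False jb q' ai[OF jin]
              by (auto simp: alpha_def ins_def \<gamma>_def Let_def)
          qed
        qed
      qed
    qed
    then show ?thesis using gp q' by (intro exI[of _ \<gamma>] exI[of _ "Some q'"]) (simp add: valid_q_def)
  qed
qed


theorem lemma2:
  fixes m :: nat
  assumes "1 \<le> m"
  shows "setsum_sp (lspan (one_hyper m)) (lspan (two_hyper m))
       = setsum_sp (lspan (rot_gens m)) (lspan (two_hyper m))"
proof -
  let ?L = "setsum_sp (lspan (one_hyper m)) (lspan (two_hyper m))"
  let ?R = "setsum_sp (lspan (rot_gens m)) (lspan (two_hyper m))"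
  have sL: "subsp ?L" and sR: "subsp ?R" by (intro subsp_setsum subsp_lspan)+
  have twoR: "two_hyper m \<subseteq> ?R" by (intro subsetI setsum_right[OF subsp_lspan] lspan_sup[THEN subsetD])
  have twoL: "two_hyper m \<subseteq> ?L" by (intro subsetI setsum_right[OF subsp_lspan] lspan_sup[THEN subsetD])
  have oneL: "one_hyper m \<subseteq> ?L" by (intro subsetI setsum_left[OF subsp_lspan] lspan_sup[THEN subsetD])
  have rotR: "rot_gens m \<subseteq> ?R" by (intro subsetI setsum_left[OF subsp_lspan] lspan_sup[THEN subsetD])
  have oneR: "one_hyper m \<subseteq> ?R"
  proof
    fix e assume "e \<in> one_hyper m"
    then obtain \<gamma> q v q' where H: "2 \<le> m" "\<gamma> permutes {1..m-1}" "valid_q (m-1) q"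
      "is_cycle_of \<gamma> (m-1) v" "q = Some q'" "q' \<in> v" "e = E_elt m \<gamma> q v"
      unfolding one_hyper_def by blast
    let ?C = "{v. is_cycle_of \<gamma> (m-1) v}"
    let ?r = "\<lambda>p. basis_elt (alpha m \<gamma> q 0) p - basis_elt (alpha m \<gamma> q (m-1)) p"
    let ?s = "\<lambda>p. \<Sum>w\<in>?C - {v}. E_elt m \<gamma> q w p"
    have se: "(\<lambda>p. \<Sum>w\<in>?C. E_elt m \<gamma> q w p) = ?r" using sum_E[OF H(1,2)] .
    have "?r \<in> rot_gens m"
      unfolding rot_gens_def using alpha0_permutes[OF H(1-3)] conj_alpha[OF assms, of \<gamma> q]
      by (intro CollectI exI[of _ "alpha m \<gamma> q 0"]) simp
    then have rr: "?r \<in> ?R" using rotR by blast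
    have ss: "?s \<in> ?R"
    proof (rule subsp_sum[OF sR])
      show "finite (?C - {v})" using cyc_finite[OF H(1,2)] by simp
    next
      fix w assume w: "w \<in> ?C - {v}"
      then have "q' \<notin> w" using cyc_disj[OF H(1,2), of v w] H by auto
      then have "E_elt m \<gamma> q w \<in> two_hyper m" unfolding two_hyper_def using H w
        by (intro CollectI exI[of _ \<gamma>] exI[of _ q] exI[of _ w]) simp
      then show "E_elt m \<gamma> q w \<in> ?R" using twoR by blast
    qed
    have "e = (\<lambda>p. ?r p + (\<lambda>p. (-1) * ?s p) p)"
    proof
      fix p
      have "?r p = E_elt m \<gamma> q v p + ?s p"
        using fun_cong[OF se, of p] sum.remove[OF cyc_finite[OF H(1,2)], of v "\<lambda>w. E_elt m \<gamma> q w p"] H(4)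
        by simp
      then show "e p = ?r p + (\<lambda>p. (-1) * ?s p) p" using H(7) by simp
    qed
    moreover have "(\<lambda>p. ?r p + (\<lambda>p. (-1) * ?s p) p) \<in> ?R"
      by (rule subsp_add[OF sR rr subsp_scale[OF sR ss]])
    ultimately show "e \<in> ?R" by (simp only:)
  qed
  have rotL: "rot_gens m \<subseteq> ?L"
  proof
    fix x assume "x \<in> rot_gens m"
    then obtain a where a: "a permutes {1..m}" "x = (\<lambda>p. basis_elt a p - basis_elt (inv (sigma m) \<circ> a \<circ> sigma m) p)"
      unfolding rot_gens_def by blast
    show "x \<in> ?L"
    proof (cases "m = 1")
      case True
      have "sigma m = id" using True by (auto simp: sigma_def)
      then have "x = (\<lambda>p. 0)" using a by simp
      then show ?thesis using subsp_zero[OF sL] by simp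
    next
      case False
      then have m2: "2 \<le> m" using assms by simp
      obtain \<gamma> q where g: "\<gamma> permutes {1..m-1}" "valid_q (m-1) q" "alpha m \<gamma> q 0 = a"
        using construct[OF m2 a(1)] by blast
      have "x = (\<lambda>p. \<Sum>w\<in>{v. is_cycle_of \<gamma> (m-1) v}. E_elt m \<gamma> q w p)"
        unfolding sum_E[OF m2 g(1)] a(2) using conj_alpha[OF assms, of \<gamma> q] g(3) by simp
      also have "\<dots> \<in> ?L"
      proof (rule subsp_sum[OF sL])
        show "finite {v. is_cycle_of \<gamma> (m-1) v}" using cyc_finite[OF m2 g(1)] .
      next
        fix w assume w: "w \<in> {v. is_cycle_of \<gamma> (m-1) v}"
        show "E_elt m \<gamma> q w \<in> ?L"
        proof (cases "\<exists>q'. q = Some q' \<and> q' \<in> w")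
          case True
          then have "E_elt m \<gamma> q w \<in> one_hyper m" unfolding one_hyper_def using m2 g w True
            by (intro CollectI exI[of _ \<gamma>] exI[of _ q] exI[of _ w]) simp
          then show ?thesis using oneL by blast
        next
          case False
          then have "E_elt m \<gamma> q w \<in> two_hyper m" unfolding two_hyper_def using m2 g w False
            by (intro CollectI exI[of _ \<gamma>] exI[of _ q] exI[of _ w]) simp
          then show ?thesis using twoL by blast
        qed
      qed
      finally show ?thesis .
    qed
  qed
  show ?thesis
  proof
    show "?L \<subseteq> ?R" by (rule setsum_sub[OF sR lspan_least[OF sR oneR] lspan_least[OF sR twoR]])
    show "?R \<subseteq> ?L" by (rule setsum_sub[OF sL lspan_least[OF sL rotL] lspan_least[OF sL twoL]])
  qed
qed


end
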